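(* Let $q>0$, $q\neq1$, and $\nu\in\mathbb{R}$. For every integer $N\ge 0$, $$H_N(x,\nu t;q)=\sum_{k=0}^{\lfloor N/2\rfloor}\frac{(\nu t)^k x^{N-2k}[N]_q!}{k!\,[N-2k]_q!},$$ one has the identity of formal power series in $k$ $$e^{\nu k^2 t}\,e_q(kx)=\sum_{N=0}^\infty H_N(x,\nu t;q)\frac{k^N}{[N]_q!},$$ and each $\phi(x,t)=H_N(x,\nu t;q)$ solves the $q$-heat equation $\partial_t\phi(x,t)-\nu D_x^2\phi(x,t)=0$ for all real $t$ and real $x\neq0$.
   Context: For $n\ge 0$ let $[n]_q=\frac{q^n-1}{q-1}$, $[0]_q!=1$, $[n]_q!=[1]_q\cdots[n]_q$, and $e_q(z)=\sum_{n\ge0}z^n/[n]_q!$. The $q$-derivative in $x$ is $D_xf(x)=\frac{f(qx)-f(x)}{(q-1)x}$ (acting at fixed $t$), $D_x^2=D_x\circ D_x$, and $\partial_t$ is the ordinary partial derivative. The $q$-Hermite polynomials $H_N(y;q)$ are defined by the identity of formal power series in $s$: $e^{-s^2}e_q([2]_q s y)=\sum_{N\ge0}H_N(y;q)\,s^N/[N]_q!$; $H_N(y;q)$ contains only monomials $y^{N-2k}$. The $q$-Kampe-de Feriet polynomials are $H_N(x,\nu t;q)=(-\nu t)^{N/2}H_N\big(\tfrac{x}{[2]_q\sqrt{-\nu t}};q\big)$, understood as the resulting polynomial in $x$ and $\nu t$. *)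

theory Defs
  imports "HOL-Analysis.Analysis" "HOL-Computational_Algebra.Formal_Power_Series"
    "HOL-Computational_Algebra.Polynomial"
begin

definition qnum :: "real \<Rightarrow> nat \<Rightarrow> real" where
  "qnum q n = (q ^ n - 1) / (q - 1)"

definition qfact :: "real \<Rightarrow> nat \<Rightarrow> real" where
  "qfact q n = (\<Prod>i=1..n. qnum q i)"

definition eq_fps :: "real \<Rightarrow> real \<Rightarrow> real fps" where
  "eq_fps q x = Abs_fps (\<lambda>n. x ^ n / qfact q n)"

definition qD :: "real \<Rightarrow> (real \<Rightarrow> real) \<Rightarrow> real \<Rightarrow> real" where
  "qD q f x = (f (q * x) - f x) / ((q - 1) * x)"

text \<open>q-Hermite polynomials H_N(y;q), defined by the generating function
  e^{-s^2} e_q([2]_q s y) = \<Sum>_N H_N(y;q) s^N/[N]_q!  (power series in s with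
  coefficients polynomials in y).\<close>
definition qHermite :: "real \<Rightarrow> nat \<Rightarrow> real poly" where
  "qHermite q N = smult (qfact q N)
     (fps_nth (Abs_fps (\<lambda>n. if even n then [: (-1) ^ (n div 2) / fact (n div 2) :] else 0)
             * Abs_fps (\<lambda>n. smult (1 / qfact q n) ([:0, qnum q 2:] ^ n))) N)"

text \<open>q-Kampe-de Feriet polynomials H_N(x, w; q) = (-w)^{N/2} H_N(x/([2]_q sqrt(-w)); q),
  as a polynomial in x and w: the monomial c_j y^j of H_N (with N - j even) becomes
  c_j (x/[2]_q)^j (-w)^{(N-j)/2}.\<close>
definition qKdF :: "real \<Rightarrow> nat \<Rightarrow> real \<Rightarrow> real \<Rightarrow> real" where
  "qKdF q N x w = (\<Sum>j\<le>N. if even (N - j)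
       then coeff (qHermite q N) j * (x / qnum q 2) ^ j * (- w) ^ ((N - j) div 2) else 0)"

end

theory Submission
  imports Defs
begin


lemma sum_even_reindex:
  "(\<Sum>i=0..(n::nat). if even i then g (i div 2) else (0::real)) = (\<Sum>m\<le>n div 2. g m)"
proof (induction n)
  case 0 then show ?case by simp
next
  case (Suc n)
  show ?case
  proof (cases "even (Suc n)")
    case True
    then have "Suc n div 2 = Suc (n div 2)" by presburger
    with True Suc show ?thesis by (simp add: sum.atMost_Suc)
  next
    case False
    then have "Suc n div 2 = n div 2" by presburger
    with False Suc show ?thesis by simp
  qed
qed

lemma qnum_nz: assumes "q > 0" "q \<noteq> 1" "n > 0" shows "qnum q n \<noteq> 0"
proof -
  have "q ^ n \<noteq> 1" using assms power_eq_1_iff[of q n] by auto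
  then show ?thesis using assms by (simp add: qnum_def)
qed

lemma qfact_Suc: "qfact q (Suc n) = qfact q n * qnum q (Suc n)"
  by (simp add: qfact_def prod.nat_ivl_Suc')

lemma qfact_nz: assumes "q > 0" "q \<noteq> 1" shows "qfact q n \<noteq> 0"
  using assms by (induction n) (auto simp: qfact_Suc qfact_def[of q 0] qnum_nz)

lemma qnum2_nz: assumes "q > 0" "q \<noteq> 1" shows "qnum q 2 \<noteq> 0"
  using qnum_nz[OF assms, of 2] by simp

lemma pX_power: "[:0, a:] ^ n = monom (a ^ n) n"
proof -
  have "[:0, a:] = monom a 1" by (simp add: monom_Suc monom_0)
  then show ?thesis by (simp add: monom_power)
qed

lemma coeff_qHermite:
  assumes "j \<le> N"
  shows "coeff (qHermite q N) j = (if even (N - j) then qfact q N * ((-1) ^ ((N - j) div 2) / fact ((N - j) div 2))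
      * (1 / qfact q j) * qnum q 2 ^ j else 0)"
proof -
  have "coeff (qHermite q N) j = qfact q N * (\<Sum>i=0..N. (if even i then (-1) ^ (i div 2) / fact (i div 2) else 0)
      * ((1 / qfact q (N - i)) * (if j = N - i then qnum q 2 ^ (N - i) else 0)))"
    unfolding qHermite_def fps_mult_nth
    apply (simp add: coeff_sum pX_power)
    apply (rule disjI2, rule sum.cong, simp)
    apply (auto simp: coeff_monom)
    done
  also have "(\<Sum>i=0..N. (if even i then (-1) ^ (i div 2) / fact (i div 2) else 0)
      * ((1 / qfact q (N - i)) * (if j = N - i then qnum q 2 ^ (N - i) else 0)))
    = (\<Sum>i=0..N. if i = N - j then (if even i then (-1) ^ (i div 2) / fact (i div 2) else 0)
      * ((1 / qfact q (N - i)) * qnum q 2 ^ (N - i)) else 0)"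
    by (rule sum.cong) (use assms in auto)
  also have "\<dots> = (if even (N - j) then (-1) ^ ((N - j) div 2) / fact ((N - j) div 2) else 0)
      * ((1 / qfact q j) * qnum q 2 ^ j)"
    using assms by (simp add: sum.delta)
  finally show ?thesis by simp
qed

lemma qKdF_closed:
  assumes q: "q > 0" "q \<noteq> 1"
  shows "qKdF q N x w = (\<Sum>k\<le>N div 2. w ^ k * x ^ (N - 2 * k) * qfact q N / (fact k * qfact q (N - 2 * k)))"
proof -
  define G where "G m = w ^ m * x ^ (N - 2 * m) * qfact q N / (fact m * qfact q (N - 2 * m))" for m
  have a: "qnum q 2 \<noteq> 0" using qnum2_nz[OF q] .
  have "qKdF q N x w = (\<Sum>j=0..N. if even (N - j) then G ((N - j) div 2) else 0)"
    unfolding qKdF_def atMost_atLeast0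
  proof (rule sum.cong[OF refl])
    fix j assume j: "j \<in> {0..N}"
    show "(if even (N - j) then coeff (qHermite q N) j * (x / qnum q 2) ^ j * (- w) ^ ((N - j) div 2) else 0) =
          (if even (N - j) then G ((N - j) div 2) else 0)"
    proof (cases "even (N - j)")
      case True
      define m where "m = (N - j) div 2"
      have jm: "N - 2 * m = j" using True j unfolding m_def by auto
      have e: "(-1::real) ^ m * (- w) ^ m = w ^ m"
        by (subst power_mult_distrib[symmetric]) simp
      have e2: "qnum q 2 ^ j * (x / qnum q 2) ^ j = x ^ j" using a by (simp add: power_divide)
      have "qfact q N * ((-1) ^ m / fact m) * (1 / qfact q j) * qnum q 2 ^ j * (x / qnum q 2) ^ j * (- w) ^ m
         = qfact q N * ((-1) ^ m * (- w) ^ m) * (qnum q 2 ^ j * (x / qnum q 2) ^ j) / (fact m * qfact q j)"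
        by simp
      also have "\<dots> = G m" unfolding G_def e e2 jm by simp
      finally show ?thesis using True j
        by (simp add: coeff_qHermite m_def)
    qed simp
  qed
  also have "\<dots> = (\<Sum>i=0..N. if even i then G (i div 2) else 0)"
    by (subst sum.atLeastAtMost_rev) (rule sum.cong, auto)
  also have "\<dots> = (\<Sum>m\<le>N div 2. G m)" by (rule sum_even_reindex)
  finally show ?thesis unfolding G_def .
qed

lemma exp_X2_nth: "fps_nth (fps_exp c oo fps_X ^ 2) n = (if even n then c ^ (n div 2) / fact (n div 2) else (0::real))"
proof -
  have "fps_nth (fps_exp c oo fps_X ^ 2) n = (\<Sum>i=0..n. c ^ i / fact i * (if n = 2 * i then 1 else 0))"
    by (simp add: fps_compose_nth power_mult[symmetric] mult.commute)
  also have "\<dots> = (\<Sum>i=0..n. if i = n div 2 \<and> even n then c ^ i / fact i else 0)"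
    by (rule sum.cong) auto
  also have "\<dots> = (if even n then c ^ (n div 2) / fact (n div 2) else 0)"
    by (cases "even n") (simp_all add: sum.delta)
  finally show ?thesis .
qed

lemma part2:
  assumes q: "q > 0" "q \<noteq> 1"
  shows "(fps_exp c oo fps_X ^ 2) * eq_fps q x = Abs_fps (\<lambda>N. qKdF q N x c / qfact q N)"
proof (rule fps_ext)
  fix n
  define g where "g m = c ^ m / fact m * (x ^ (n - 2 * m) / qfact q (n - 2 * m))" for m
  have "fps_nth ((fps_exp c oo fps_X ^ 2) * eq_fps q x) n = (\<Sum>i=0..n. if even i then g (i div 2) else 0)"
    unfolding fps_mult_nth eq_fps_def
    by (rule sum.cong) (auto simp: exp_X2_nth g_def)
  also have "\<dots> = (\<Sum>m\<le>n div 2. g m)" by (rule sum_even_reindex)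
  also have "\<dots> = qKdF q n x c / qfact q n"
    unfolding qKdF_closed[OF q] sum_divide_distrib g_def
    by (rule sum.cong) (use qfact_nz[OF q] in auto)
  finally show "fps_nth ((fps_exp c oo fps_X ^ 2) * eq_fps q x) n = fps_nth (Abs_fps (\<lambda>N. qKdF q N x c / qfact q N)) n"
    by simp
qed

lemma qD_pow: assumes "x \<noteq> 0" "q \<noteq> 1"
  shows "(c * (q * x) ^ n - c * x ^ n) / ((q - 1) * x) = c * qnum q n * x ^ (n - 1)"
proof (cases n)
  case 0 then show ?thesis by (simp add: qnum_def)
next
  case (Suc m)
  have "(c * (q * x) ^ n - c * x ^ n) / ((q - 1) * x) = c * ((q ^ n - 1) / (q - 1)) * (x ^ Suc m / x)"
    using assms by (simp add: Suc power_mult_distrib field_simps)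
  also have "x ^ Suc m / x = x ^ m" using assms by simp
  finally show ?thesis by (simp add: qnum_def Suc)
qed

lemma qD_sum_pow: assumes "x \<noteq> 0" "q \<noteq> 1"
  shows "qD q (\<lambda>y. \<Sum>k\<in>A. c k * y ^ n k) x = (\<Sum>k\<in>A. c k * qnum q (n k) * x ^ (n k - 1))"
  unfolding qD_def sum_subtractf[symmetric] sum_divide_distrib
  by (rule sum.cong) (use qD_pow[OF assms] in auto)

lemma qD_cong: "f (q * x) = g (q * x) \<Longrightarrow> f x = g x \<Longrightarrow> qD q f x = qD q g x"
  by (simp add: qD_def)

lemma part3:
  assumes q: "q > 0" "q \<noteq> 1" and x: "x \<noteq> 0"
  shows "((\<lambda>s. qKdF q N x (\<nu> * s)) has_real_derivative
            \<nu> * qD q (qD q (\<lambda>y. qKdF q N y (\<nu> * t))) x) (at t)"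
proof -
  define C where "C k = qfact q N / (fact k * qfact q (N - 2 * k))" for k
  define M where "M = N div 2"
  have F: "qKdF q N y w = (\<Sum>k\<le>M. (w ^ k * C k) * y ^ (N - 2 * k))" for y w
    unfolding qKdF_closed[OF q] C_def M_def by (rule sum.cong) auto
  have D1: "((\<lambda>s. qKdF q N x (\<nu> * s)) has_real_derivative
      (\<Sum>k\<le>M. (of_nat k * (\<nu> * t) ^ (k - 1) * \<nu> * C k) * x ^ (N - 2 * k))) (at t)"
    unfolding F
    by (rule DERIV_sum) (auto intro!: derivative_eq_intros)
  have qx: "q * x \<noteq> 0" using q x by simp
  have Q: "qD q (qD q (\<lambda>y. qKdF q N y (\<nu> * t))) x =
     (\<Sum>k\<le>M. ((\<nu> * t) ^ k * C k * qnum q (N - 2 * k)) * qnum q (N - 2 * k - 1) * x ^ (N - 2 * k - 1 - 1))"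
  proof -
    have "qD q (qD q (\<lambda>y. qKdF q N y (\<nu> * t))) x =
        qD q (\<lambda>y. \<Sum>k\<le>M. ((\<nu> * t) ^ k * C k * qnum q (N - 2 * k)) * y ^ (N - 2 * k - 1)) x"
      unfolding F
      by (rule qD_cong) (simp_all add: qD_sum_pow[OF qx q(2)] qD_sum_pow[OF x q(2)])
    also have "\<dots> = (\<Sum>k\<le>M. ((\<nu> * t) ^ k * C k * qnum q (N - 2 * k)) * qnum q (N - 2 * k - 1) * x ^ (N - 2 * k - 1 - 1))"
      by (rule qD_sum_pow[OF x q(2)])
    finally show ?thesis .
  qed
  have E: "(\<Sum>k\<le>M. (of_nat k * (\<nu> * t) ^ (k - 1) * \<nu> * C k) * x ^ (N - 2 * k)) =
     \<nu> * (\<Sum>k\<le>M. ((\<nu> * t) ^ k * C k * qnum q (N - 2 * k)) * qnum q (N - 2 * k - 1) * x ^ (N - 2 * k - 1 - 1))"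
  proof (cases M)
    case 0
    then have "N = 0 \<or> N = 1" unfolding M_def by auto
    then show ?thesis using 0 by (auto simp: qnum_def)
  next
    case (Suc m)
    have last: "qnum q (N - 2 * Suc m) * qnum q (N - 2 * Suc m - 1) = 0"
    proof -
      have "N - 2 * Suc m = 0 \<or> N - 2 * Suc m = 1" using Suc unfolding M_def by auto
      then show ?thesis by (auto simp: qnum_def)
    qed
    have "(\<Sum>k\<le>M. (of_nat k * (\<nu> * t) ^ (k - 1) * \<nu> * C k) * x ^ (N - 2 * k))
        = (\<Sum>k\<le>m. (of_nat (Suc k) * (\<nu> * t) ^ k * \<nu> * C (Suc k)) * x ^ (N - 2 * Suc k))"
      unfolding Suc by (subst sum.atMost_Suc_shift) simp
    also have "\<dots> = (\<Sum>k\<le>m. \<nu> * (((\<nu> * t) ^ k * C k * qnum q (N - 2 * k)) * qnum q (N - 2 * k - 1) * x ^ (N - 2 * k - 1 - 1)))"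
    proof (rule sum.cong[OF refl])
      fix k assume k: "k \<in> {..m}"
      define r where "r = N - 2 * k - 2"
      have r1: "N - 2 * k = Suc (Suc r)" and r2: "N - 2 * Suc k = r"
        using k Suc unfolding r_def M_def by auto
      have ff: "qfact q (Suc (Suc r)) = qfact q r * qnum q (Suc r) * qnum q (Suc (Suc r))"
        by (simp add: qfact_Suc)
      have nz: "qfact q r \<noteq> 0" "qnum q (Suc r) \<noteq> 0" "qnum q (Suc (Suc r)) \<noteq> 0" "qfact q N \<noteq> 0"
        using qfact_nz[OF q] qnum_nz[OF q] by auto
      have "of_nat (Suc k) * C (Suc k) = C k * qnum q (Suc (Suc r)) * qnum q (Suc r)"
      proof -
        have g: "a \<noteq> 0 \<Longrightarrow> a * (X / (a * b * c)) = X / (b * c)" for a b c X :: real by simp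
        have "of_nat (Suc k) * C (Suc k) = qfact q N / (fact k * qfact q r)"
          unfolding C_def r2 fact_Suc of_nat_mult by (rule g) simp
        also have "\<dots> = C k * qnum q (Suc (Suc r)) * qnum q (Suc r)"
          unfolding C_def r1 ff using nz by (simp add: field_simps)
        finally show ?thesis .
      qed
      note h = this
      have "(of_nat (Suc k) * (\<nu> * t) ^ k * \<nu> * C (Suc k)) * x ^ r
          = (\<nu> * (\<nu> * t) ^ k * x ^ r) * (of_nat (Suc k) * C (Suc k))"
        by (simp only: mult_ac)
      also have "\<dots> = (\<nu> * (\<nu> * t) ^ k * x ^ r) * (C k * qnum q (Suc (Suc r)) * qnum q (Suc r))"
        by (simp only: h)
      also have "\<dots> = \<nu> * (((\<nu> * t) ^ k * C k * qnum q (Suc (Suc r))) * qnum q (Suc (Suc r) - 1) * x ^ (Suc (Suc r) - 1 - 1))"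
        by (simp only: mult_ac diff_Suc_1)
      finally show "(of_nat (Suc k) * (\<nu> * t) ^ k * \<nu> * C (Suc k)) * x ^ (N - 2 * Suc k) =
          \<nu> * (((\<nu> * t) ^ k * C k * qnum q (N - 2 * k)) * qnum q (N - 2 * k - 1) * x ^ (N - 2 * k - 1 - 1))"
        unfolding r1 r2 .
    qed
    also have "\<dots> = \<nu> * (\<Sum>k\<le>M. ((\<nu> * t) ^ k * C k * qnum q (N - 2 * k)) * qnum q (N - 2 * k - 1) * x ^ (N - 2 * k - 1 - 1))"
      unfolding Suc sum_distrib_left[symmetric] using last by (simp add: sum.atMost_Suc)
    finally show ?thesis .
  qed
  show ?thesis using D1 unfolding Q E[symmetric] .
qed



theorem mainTheorem7:
  fixes q \<nu> :: real
  assumes "q > 0" and "q \<noteq> 1"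
  shows "\<forall>N::nat.
     (\<forall>x t::real. qKdF q N x (\<nu> * t) =
        (\<Sum>k\<le>N div 2. (\<nu> * t) ^ k * x ^ (N - 2 * k) * qfact q N
                          / (fact k * qfact q (N - 2 * k))))
   \<and> (\<forall>x t::real. (fps_exp (\<nu> * t) oo fps_X ^ 2) * eq_fps q x
                   = Abs_fps (\<lambda>N. qKdF q N x (\<nu> * t) / qfact q N))
   \<and> (\<forall>x t::real. x \<noteq> 0 \<longrightarrow>
        ((\<lambda>s. qKdF q N x (\<nu> * s)) has_real_derivative
            \<nu> * qD q (qD q (\<lambda>y. qKdF q N y (\<nu> * t))) x) (at t))"
proof (intro allI conjI impI)
  fix N :: nat and x t :: real
  show "qKdF q N x (\<nu> * t) = (\<Sum>k\<le>N div 2. (\<nu> * t) ^ k * x ^ (N - 2 * k) * qfact q N / (fact k * qfact q (N - 2 * k)))"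
    by (rule qKdF_closed[OF assms])
next
  fix N :: nat and x t :: real
  show "(fps_exp (\<nu> * t) oo fps_X ^ 2) * eq_fps q x = Abs_fps (\<lambda>N. qKdF q N x (\<nu> * t) / qfact q N)"
    by (rule part2[OF assms])
next
  fix N :: nat and x t :: real
  assume "x \<noteq> 0"
  then show "((\<lambda>s. qKdF q N x (\<nu> * s)) has_real_derivative \<nu> * qD q (qD q (\<lambda>y. qKdF q N y (\<nu> * t))) x) (at t)"
    by (rule part3[OF assms])
qed

end
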